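(* In the setting described in the context, for every real $s>\frac n2$, $$\exp\Big(-\frac{s-\frac n2}{\tau^2}\Big)<\frac{g(s+1)}{g(s)}<\exp\Big(-\Big(1-\frac1{12\tau^2}\Big)\frac{s-\frac n2}{\tau^2}\Big).$$
   Context: Standing setting: $\Phi$ is the standard normal distribution function. Binomial law $\mathrm B_{m,p}(\{k\})=\binom mk p^k(1-p)^{m-k}$; hypergeometric law $\mathrm H_{m,r,b}(\{k\})=\binom rk\binom b{m-k}/\binom{r+b}m$ ($r,b\in\mathbb N_0$, $m\in\{0,\dots,r+b\}$, $k\in\mathbb Z$, binomial coefficients with non-integer lower index being $0$). $P$ is a symmetric (about its mean) hypergeometric or symmetric binomial law with mean $\frac n2$ and standard deviation $\sigma>0$; $N\in\mathbb N\cup\{\infty\}$ is a population size parameter of $P$ (i.e. $N=\infty$ and $P$ binomial, or $P=\mathrm H_{m,r,b}$ with $r+b=N$); $\sigma_0^2=\frac{N-1}N\sigma^2$ if $N<\infty$, $\sigma_0^2=\sigma^2$ if $N=\infty$. $\tau\in[\sigma_0,\sigma]$, $G(s)=\Phi((s-\frac n2)/\tau)$ and $g(s):=G(s)-G(s-1)$ for $s\in\mathbb R$. *)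

theory Defs
  imports "HOL-Probability.Probability" "HOL-Library.Extended_Nat"
begin

definition Phi :: "real \<Rightarrow> real" where
  "Phi x = measure (density lborel std_normal_density) {..x}"

text \<open>Laws on the integers, given as point-mass functions on the reals
  (mass 0 at non-integers).\<close>
definition binom_law :: "nat \<Rightarrow> real \<Rightarrow> real \<Rightarrow> real" where
  "binom_law m p x =
     (if x \<in> \<int> \<and> 0 \<le> x then
        real (m choose nat \<lfloor>x\<rfloor>) * p ^ nat \<lfloor>x\<rfloor> * (1 - p) ^ (m - nat \<lfloor>x\<rfloor>)
      else 0)"

definition hyper_law :: "nat \<Rightarrow> nat \<Rightarrow> nat \<Rightarrow> real \<Rightarrow> real" where
  "hyper_law m r b x =
     (if x \<in> \<int> \<and> 0 \<le> x \<and> x \<le> real m then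
        real (r choose nat \<lfloor>x\<rfloor>) * real (b choose (m - nat \<lfloor>x\<rfloor>)) / real ((r + b) choose m)
      else 0)"

definition law_mean :: "(real \<Rightarrow> real) \<Rightarrow> real" where
  "law_mean P = (\<Sum>\<^sub>\<infinity> x. x * P x)"

definition law_var :: "(real \<Rightarrow> real) \<Rightarrow> real" where
  "law_var P = (\<Sum>\<^sub>\<infinity> x. (x - law_mean P)\<^sup>2 * P x)"

definition sym_about_mean :: "(real \<Rightarrow> real) \<Rightarrow> bool" where
  "sym_about_mean P \<longleftrightarrow> (\<forall>x. P (law_mean P + x) = P (law_mean P - x))"

definition sigma0 :: "enat \<Rightarrow> real \<Rightarrow> real" where
  "sigma0 N \<sigma> = (case N of enat k \<Rightarrow> sqrt ((real k - 1) / real k) * \<sigma> | \<infinity> \<Rightarrow> \<sigma>)"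

definition GG :: "real \<Rightarrow> real \<Rightarrow> real \<Rightarrow> real" where
  "GG n \<tau> s = Phi ((s - n / 2) / \<tau>)"

definition gg :: "real \<Rightarrow> real \<Rightarrow> real \<Rightarrow> real" where
  "gg n \<tau> s = GG n \<tau> s - GG n \<tau> (s - 1)"

end

theory Submission imports Defs begin

lemma Phi_diff:
  assumes ab: "a \<le> b"
  shows "Phi b - Phi a = integral {a..b} std_normal_density"
proof -
  define D where "D = density lborel std_normal_density"
  interpret prob_space D unfolding D_def by (rule prob_space_normal_density) simp
  have sD: "sets D = sets borel" unfolding D_def by simp
  have "measure D {..b} - measure D {..a} = measure D ({..b} - {..a})"
    using ab by (subst finite_measure_Diff) (auto simp: sD)
  also have "{..b} - {..a} = {a<..b}" by auto
  finally have 1: "Phi b - Phi a = measure D {a<..b}" unfolding Phi_def D_def by simp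
  define I where "I = integral {a..b} std_normal_density"
  have cont: "continuous_on {a..b} std_normal_density"
    unfolding std_normal_density_def by (intro continuous_intros) auto
  have hi: "(std_normal_density has_integral I) {a..b}"
    unfolding I_def using integrable_continuous_real[OF cont] by blast
  have hi2: "(std_normal_density has_integral I) {a<..b}"
  proof (subst has_integral_spike_set_eq)
    show "negligible {x \<in> {a<..b} - {a..b}. std_normal_density x \<noteq> 0}"
      by (rule negligible_subset[of "{}"]) auto
    show "negligible {x \<in> {a..b} - {a<..b}. std_normal_density x \<noteq> 0}"
      by (rule negligible_subset[of "{a}"]) auto
  qed (rule hi)
  have "emeasure D {a<..b} = (\<integral>\<^sup>+ x. ennreal (std_normal_density x) * indicator {a<..b} x \<partial>lborel)"
    unfolding D_def by (subst emeasure_density) auto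
  also have "\<dots> = ennreal I"
    by (rule nn_integral_has_integral_lebesgue'[OF _ hi2]) simp
  finally have "emeasure D {a<..b} = ennreal I" .
  moreover have "I \<ge> 0" using hi2 has_integral_nonneg by (metis normal_density_nonneg)
  ultimately have "measure D {a<..b} = I" by (simp add: measure_def)
  then show ?thesis using 1 I_def by simp
qed

lemma Phi_deriv: "(Phi has_real_derivative std_normal_density t) (at t)"
proof -
  have cont: "continuous_on {t-1..t+1} std_normal_density"
    unfolding std_normal_density_def by (intro continuous_intros) auto
  have "((\<lambda>x. integral {t-1..x} std_normal_density) has_real_derivative std_normal_density t) (at t within {t-1..t+1})"
    by (rule integral_has_real_derivative[OF cont]) auto
  then have d: "((\<lambda>x. integral {t-1..x} std_normal_density) has_real_derivative std_normal_density t) (at t)"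
    by (subst (asm) at_within_interior) auto
  have "((\<lambda>x. Phi (t-1) + integral {t-1..x} std_normal_density) has_real_derivative std_normal_density t) (at t)"
    using d by (auto intro!: derivative_eq_intros)
  then show ?thesis
  proof (rule has_field_derivative_transform_within_open[where S="{t-1<..}"])
    fix x :: real assume "x \<in> {t-1<..}"
    then show "Phi (t - 1) + integral {t - 1..x} std_normal_density = Phi x"
      using Phi_diff[of "t-1" x] by simp
  qed auto
qed


definition Jf :: "real \<Rightarrow> real \<Rightarrow> real" where
  "Jf \<tau> c = integral {0..1/2} (\<lambda>w. exp (-(w\<^sup>2) / (2*\<tau>\<^sup>2)) * cosh (c*w/\<tau>\<^sup>2))"

lemma dens_id:
  assumes "\<tau> > 0"
  shows "std_normal_density ((c+w)/\<tau>) + std_normal_density ((c-w)/\<tau>)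
     = (2 / sqrt (2*pi)) * exp (-(c\<^sup>2)/(2*\<tau>\<^sup>2)) * (exp (-(w\<^sup>2) / (2*\<tau>\<^sup>2)) * cosh (c*w/\<tau>\<^sup>2))"
proof -
  have e1: "exp (- ((c+w)/\<tau>)\<^sup>2 / 2) = exp (-(c\<^sup>2)/(2*\<tau>\<^sup>2)) * exp (-(w\<^sup>2) / (2*\<tau>\<^sup>2)) * exp (-(c*w/\<tau>\<^sup>2))"
    unfolding exp_add[symmetric] using assms by (intro arg_cong[where f=exp]) (simp add: field_simps power2_eq_square)
  have e2: "exp (- ((c-w)/\<tau>)\<^sup>2 / 2) = exp (-(c\<^sup>2)/(2*\<tau>\<^sup>2)) * exp (-(w\<^sup>2) / (2*\<tau>\<^sup>2)) * exp (c*w/\<tau>\<^sup>2)"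
    unfolding exp_add[symmetric] using assms by (intro arg_cong[where f=exp]) (simp add: field_simps power2_eq_square)
  show ?thesis unfolding std_normal_density_def e1 e2 cosh_def
    by (simp add: field_simps)
qed

lemma Phi_J:
  assumes tau: "\<tau> > 0"
  shows "Phi ((c+1/2)/\<tau>) - Phi ((c-1/2)/\<tau>) = (2 / (sqrt (2*pi) * \<tau>)) * exp (-(c\<^sup>2)/(2*\<tau>\<^sup>2)) * Jf \<tau> c"
proof -
  define F where "F w = \<tau> * (Phi ((c+w)/\<tau>) - Phi ((c-w)/\<tau>))" for w
  have "((\<lambda>w. std_normal_density ((c+w)/\<tau>) + std_normal_density ((c-w)/\<tau>)) has_integral (F (1/2) - F 0)) {0..1/2}"
  proof (rule fundamental_theorem_of_calculus)
    fix x :: real assume "x \<in> {0..1/2}"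
    have "(F has_real_derivative std_normal_density ((c+x)/\<tau>) + std_normal_density ((c-x)/\<tau>)) (at x)"
      unfolding F_def using tau
      by (auto intro!: derivative_eq_intros Phi_deriv[THEN DERIV_chain2] simp: field_simps)
    then show "(F has_vector_derivative std_normal_density ((c+x)/\<tau>) + std_normal_density ((c-x)/\<tau>)) (at x within {0..1/2})"
      by (simp add: has_real_derivative_iff_has_vector_derivative has_vector_derivative_at_within)
  qed simp
  then have hi: "((\<lambda>w. (2 / sqrt (2*pi)) * exp (-(c\<^sup>2)/(2*\<tau>\<^sup>2)) * (exp (-(w\<^sup>2) / (2*\<tau>\<^sup>2)) * cosh (c*w/\<tau>\<^sup>2))) has_integral (F (1/2) - F 0)) {0..1/2}"
    using dens_id[OF tau] by simp
  have cont: "continuous_on {0..1/2} (\<lambda>w. exp (-(w\<^sup>2) / (2*\<tau>\<^sup>2)) * cosh (c*w/\<tau>\<^sup>2))"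
    using tau by (intro continuous_intros) auto
  have hj: "((\<lambda>w. exp (-(w\<^sup>2) / (2*\<tau>\<^sup>2)) * cosh (c*w/\<tau>\<^sup>2)) has_integral Jf \<tau> c) {0..1/2}"
    unfolding Jf_def using integrable_continuous_real[OF cont] by blast
  have "F (1/2) - F 0 = (2 / sqrt (2*pi)) * exp (-(c\<^sup>2)/(2*\<tau>\<^sup>2)) * Jf \<tau> c"
    using has_integral_unique[OF hi has_integral_mult_right[OF hj]] by simp
  then show ?thesis unfolding F_def using tau by (simp add: field_simps)
qed


lemma h_neg:
  fixes c :: real assumes "c > 0" shows "sinh c - c * cosh c < 0"
proof -
  have "\<exists>z. 0 < z \<and> z < c \<and> (sinh c - c * cosh c) - (sinh 0 - 0 * cosh 0) = (c - 0) * (- z * sinh z)"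
    by (rule MVT2[OF assms]) (auto intro!: derivative_eq_intros)
  then obtain z where z: "0 < z" "z < c" "(sinh c - c * cosh c) - (sinh 0 - 0 * cosh 0) = (c - 0) * (- z * sinh z)"
    by blast
  have "sinh z > 0" using z by simp
  then have "(c - 0) * (- z * sinh z) < 0" using z assms by (simp add: mult_pos_neg)
  then show ?thesis using z by simp
qed

lemma f_neg:
  fixes c :: real assumes "c > 0" shows "3*c* cosh c - 3* sinh c - c\<^sup>2* sinh c < 0"
proof -
  have "\<exists>z. 0 < z \<and> z < c \<and> (3*c* cosh c - 3* sinh c - c\<^sup>2* sinh c) - (3*0* cosh 0 - 3* sinh 0 - 0\<^sup>2* sinh 0) = (c - 0) * (z * (sinh z - z * cosh z))"
    by (rule MVT2[OF assms]) (auto intro!: derivative_eq_intros simp: algebra_simps power2_eq_square)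
  then obtain z where z: "0 < z" "z < c" "(3*c* cosh c - 3* sinh c - c\<^sup>2* sinh c) - (3*0* cosh 0 - 3* sinh 0 - 0\<^sup>2* sinh 0) = (c - 0) * (z * (sinh z - z * cosh z))"
    by blast
  have "sinh z - z * cosh z < 0" using h_neg z by simp
  then have "(c - 0) * (z * (sinh z - z * cosh z)) < 0" using z assms by (simp add: mult_pos_neg)
  then show ?thesis using z by simp
qed

lemma k_int:
  fixes b :: real assumes b: "b > 0"
  shows "((\<lambda>w. w* sinh(b*w) - b/12* cosh(b*w)) has_integral
           (cosh (b/2)/(2*b) - sinh (b/2)/b\<^sup>2 - sinh (b/2)/12)) {0..1/2}"
proof -
  define G where "G w = w * cosh(b*w)/b - sinh(b*w)/b\<^sup>2 - sinh(b*w)/12" for w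
  have "((\<lambda>w. w* sinh(b*w) - b/12* cosh(b*w)) has_integral (G (1/2) - G 0)) {0..1/2}"
  proof (rule fundamental_theorem_of_calculus)
    fix x :: real assume "x \<in> {0..1/2}"
    have "(G has_real_derivative x* sinh(b*x) - b/12* cosh(b*x)) (at x)"
      unfolding G_def using b
      by (auto intro!: derivative_eq_intros simp: field_simps power2_eq_square)
    then show "(G has_vector_derivative x* sinh(b*x) - b/12* cosh(b*x)) (at x within {0..1/2})"
      by (simp add: has_real_derivative_iff_has_vector_derivative has_vector_derivative_at_within)
  qed simp
  then show ?thesis unfolding G_def by (simp add: field_simps)
qed

lemma k_int_neg:
  fixes b :: real assumes b: "b > 0"
  shows "cosh (b/2)/(2*b) - sinh (b/2)/b\<^sup>2 - sinh (b/2)/12 < 0"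
proof -
  define c where "c = b/2"
  have c: "c > 0" using b c_def by simp
  have bc: "b = 2*c" using c_def by simp
  have "cosh (b/2)/(2*b) - sinh (b/2)/b\<^sup>2 - sinh (b/2)/12 = (3*c* cosh c - 3* sinh c - c\<^sup>2* sinh c) / (12*c\<^sup>2)"
    unfolding bc using c by (simp add: field_simps power2_eq_square)
  also have "\<dots> < 0" using f_neg[OF c] c by (simp add: divide_neg_pos)
  finally show ?thesis .
qed

lemma m_mono:
  fixes b w w' :: real assumes "b > 0" "0 \<le> w" "w \<le> w'"
  shows "w * tanh (b*w) \<le> w' * tanh (b*w')"
  using assms by (intro mult_mono) (auto simp: mult_left_mono)

lemma k_eq: "w* sinh(b*w) - b/12* cosh(b*w) = cosh (b*w) * (w * tanh (b*w) - b/12)" for b w :: real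
  by (simp add: tanh_def field_simps)

lemma core:
  fixes \<tau> b :: real assumes tau: "\<tau> > 0" and b: "b > 0"
  shows "integral {0..1/2} (\<lambda>w. exp(-(w\<^sup>2)/(2*\<tau>\<^sup>2)) * (w* sinh(b*w) - b/12* cosh(b*w))) < 0"
proof -
  define k where "k w = w* sinh(b*w) - b/12* cosh(b*w)" for w
  define \<rho> where "\<rho> w = exp(-(w\<^sup>2)/(2*\<tau>\<^sup>2))" for w
  have rho_mono: "\<rho> w' \<le> \<rho> w" if "0 \<le> w" "w \<le> w'" for w w'
    unfolding \<rho>_def using that tau by (auto simp: divide_right_mono power_mono)
  have kneg: "k w \<le> 0" if "0 \<le> w" "w \<le> w'" "k w' \<le> 0" for w w'
  proof -
    have "w' * tanh (b*w') - b/12 \<le> 0"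
      using that(3) unfolding k_def k_eq by (simp add: mult_le_0_iff) (metis cosh_real_pos not_le)
    then have "w * tanh (b*w) - b/12 \<le> 0" using m_mono[OF b that(1,2)] by simp
    then show ?thesis unfolding k_def k_eq by (simp add: mult_nonneg_nonpos)
  qed
  have kpos: "k w' \<ge> 0" if "0 \<le> w" "w \<le> w'" "k w \<ge> 0" for w w'
  proof -
    have "w * tanh (b*w) - b/12 \<ge> 0"
      using that(3) unfolding k_def k_eq by (simp add: zero_le_mult_iff) (metis cosh_real_pos not_le)
    then have "w' * tanh (b*w') - b/12 \<ge> 0" using m_mono[OF b that(1,2)] by simp
    then show ?thesis unfolding k_def k_eq by simp
  qed
  have contk: "continuous_on {0..1/2} k" unfolding k_def by (intro continuous_intros)
  obtain w0 where w0: "0 \<le> w0" "w0 \<le> 1/2" "\<And>w. w \<in> {0..1/2} \<Longrightarrow> k w * (\<rho> w - \<rho> w0) \<le> 0"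
  proof (cases "k (1/2) \<le> 0")
    case True
    show ?thesis
    proof (rule that[of "1/2"])
      fix w :: real assume w: "w \<in> {0..1/2}"
      have "k w \<le> 0" using kneg[of w "1/2"] w True by auto
      moreover have "\<rho> w - \<rho> (1/2) \<ge> 0" using rho_mono[of w "1/2"] w by auto
      ultimately show "k w * (\<rho> w - \<rho> (1/2)) \<le> 0" by (simp add: mult_nonpos_nonneg)
    qed auto
  next
    case False
    have "k 0 < 0" unfolding k_def using b by simp
    then obtain w0 where w0: "0 \<le> w0" "w0 \<le> 1/2" "k w0 = 0"
      using IVT'[of k 0 0 "1/2"] False contk by auto
    show ?thesis
    proof (rule that[OF w0(1,2)])
      fix w :: real assume w: "w \<in> {0..1/2}"
      show "k w * (\<rho> w - \<rho> w0) \<le> 0"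
      proof (cases "w \<le> w0")
        case True
        then have "k w \<le> 0" using kneg[of w w0] w w0 by auto
        moreover have "\<rho> w - \<rho> w0 \<ge> 0" using rho_mono[of w w0] w True by auto
        ultimately show ?thesis by (simp add: mult_nonpos_nonneg)
      next
        case False
        then have "k w \<ge> 0" using kpos[of w0 w] w w0 by auto
        moreover have "\<rho> w - \<rho> w0 \<le> 0" using rho_mono[of w0 w] w w0 False by auto
        ultimately show ?thesis by (simp add: mult_nonneg_nonpos)
      qed
    qed
  qed
  have contrk: "continuous_on {0..1/2} (\<lambda>w. \<rho> w * k w)" unfolding k_def \<rho>_def using tau by (intro continuous_intros) auto
  have "integral {0..1/2} (\<lambda>w. \<rho> w * k w) \<le> integral {0..1/2} (\<lambda>w. \<rho> w0 * k w)"
  proof (rule integral_le)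
    show "(\<lambda>w. \<rho> w * k w) integrable_on {0..1/2}" using integrable_continuous_real[OF contrk] .
    show "(\<lambda>w. \<rho> w0 * k w) integrable_on {0..1/2}"
      by (rule integrable_continuous_real) (unfold k_def, intro continuous_intros)
    fix w :: real assume "w \<in> {0..1/2}"
    then show "\<rho> w * k w \<le> \<rho> w0 * k w" using w0(3)[of w] by (simp add: algebra_simps)
  qed
  also have "\<dots> = \<rho> w0 * (cosh (b/2)/(2*b) - sinh (b/2)/b\<^sup>2 - sinh (b/2)/12)"
    using k_int[OF b] unfolding k_def by (simp add: integral_unique)
  also have "\<dots> < 0" using k_int_neg[OF b] unfolding \<rho>_def by (simp add: mult_pos_neg)
  finally show ?thesis unfolding \<rho>_def k_def .
qed


lemma J_deriv:
  assumes tau: "\<tau> > 0"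
  shows "(Jf \<tau> has_real_derivative integral {0..1/2} (\<lambda>w. exp (-(w\<^sup>2) / (2*\<tau>\<^sup>2)) * (sinh (c*w/\<tau>\<^sup>2) * (w/\<tau>\<^sup>2)))) (at c)"
proof -
  have "((\<lambda>x. integral (cbox 0 (1/2)) (\<lambda>w. exp (-(w\<^sup>2) / (2*\<tau>\<^sup>2)) * cosh (x*w/\<tau>\<^sup>2))) has_field_derivative
        integral (cbox 0 (1/2)) (\<lambda>w. exp (-(w\<^sup>2) / (2*\<tau>\<^sup>2)) * (sinh (c*w/\<tau>\<^sup>2) * (w/\<tau>\<^sup>2)))) (at c within UNIV)"
  proof (rule leibniz_rule_field_derivative[where fx="\<lambda>x w. exp (-(w\<^sup>2) / (2*\<tau>\<^sup>2)) * (sinh (x*w/\<tau>\<^sup>2) * (w/\<tau>\<^sup>2))"])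
    fix x :: real and t :: real
    show "((\<lambda>x. exp (-(t\<^sup>2) / (2*\<tau>\<^sup>2)) * cosh (x*t/\<tau>\<^sup>2)) has_field_derivative exp (-(t\<^sup>2) / (2*\<tau>\<^sup>2)) * (sinh (x*t/\<tau>\<^sup>2) * (t/\<tau>\<^sup>2))) (at x within UNIV)"
      using tau by (auto intro!: derivative_eq_intros simp: field_simps eval_nat_numeral)
  next
    fix x :: real
    show "(\<lambda>w. exp (-(w\<^sup>2) / (2*\<tau>\<^sup>2)) * cosh (x*w/\<tau>\<^sup>2)) integrable_on cbox 0 (1/2)"
      using tau by (intro integrable_continuous continuous_intros) auto
  next
    show "continuous_on (UNIV \<times> cbox 0 (1/2)) (\<lambda>(x, w). exp (-(w\<^sup>2) / (2*\<tau>\<^sup>2)) * (sinh (x*w/\<tau>\<^sup>2) * (w/\<tau>\<^sup>2)))"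
      using tau by (auto simp: case_prod_beta intro!: continuous_intros)
  qed auto
  then show ?thesis unfolding Jf_def[abs_def] by simp
qed

definition Hf :: "real \<Rightarrow> real \<Rightarrow> real" where
  "Hf \<tau> c = Jf \<tau> c * exp (-(c\<^sup>2)/(24*\<tau>^4))"

lemma Hf_deriv_neg:
  assumes tau: "\<tau> > 0" and c: "c > 0"
  shows "\<exists>D. (Hf \<tau> has_real_derivative D) (at c) \<and> D < 0"
proof -
  define J' where "J' = integral {0..1/2} (\<lambda>w. exp (-(w\<^sup>2) / (2*\<tau>\<^sup>2)) * (sinh (c*w/\<tau>\<^sup>2) * (w/\<tau>\<^sup>2)))"
  have dJ: "(Jf \<tau> has_real_derivative J') (at c)" unfolding J'_def by (rule J_deriv[OF tau])
  have dH: "(Hf \<tau> has_real_derivative exp (-(c\<^sup>2)/(24*\<tau>^4)) * (J' - c/(12*\<tau>^4) * Jf \<tau> c)) (at c)"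
    unfolding Hf_def[abs_def] using tau
    by (auto intro!: derivative_eq_intros dJ simp: field_simps eval_nat_numeral)
  define b where "b = c/\<tau>\<^sup>2"
  have b: "b > 0" unfolding b_def using tau c by simp
  have cont1: "continuous_on {0..1/2} (\<lambda>w. exp (-(w\<^sup>2) / (2*\<tau>\<^sup>2)) * (sinh (c*w/\<tau>\<^sup>2) * (w/\<tau>\<^sup>2)))"
    using tau by (intro continuous_intros) auto
  have cont2: "continuous_on {0..1/2} (\<lambda>w. exp (-(w\<^sup>2) / (2*\<tau>\<^sup>2)) * cosh (c*w/\<tau>\<^sup>2))"
    using tau by (intro continuous_intros) auto
  have h1: "((\<lambda>w. exp (-(w\<^sup>2) / (2*\<tau>\<^sup>2)) * (sinh (c*w/\<tau>\<^sup>2) * (w/\<tau>\<^sup>2))) has_integral J') {0..1/2}"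
    unfolding J'_def using integrable_continuous_real[OF cont1] by blast
  have h2: "((\<lambda>w. exp (-(w\<^sup>2) / (2*\<tau>\<^sup>2)) * cosh (c*w/\<tau>\<^sup>2)) has_integral Jf \<tau> c) {0..1/2}"
    unfolding Jf_def using integrable_continuous_real[OF cont2] by blast
  have h3: "((\<lambda>w. exp (-(w\<^sup>2) / (2*\<tau>\<^sup>2)) * (sinh (c*w/\<tau>\<^sup>2) * (w/\<tau>\<^sup>2)) - c/(12*\<tau>^4) * (exp (-(w\<^sup>2) / (2*\<tau>\<^sup>2)) * cosh (c*w/\<tau>\<^sup>2)))
        has_integral (J' - c/(12*\<tau>^4) * Jf \<tau> c)) {0..1/2}"
    by (intro has_integral_diff h1 has_integral_mult_right h2)
  define Cr where "Cr = integral {0..1/2} (\<lambda>w. exp(-(w\<^sup>2)/(2*\<tau>\<^sup>2)) * (w* sinh(b*w) - b/12* cosh(b*w)))"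
  have cont3: "continuous_on {0..1/2} (\<lambda>w. exp(-(w\<^sup>2)/(2*\<tau>\<^sup>2)) * (w* sinh(b*w) - b/12* cosh(b*w)))"
    using tau by (intro continuous_intros) auto
  have h4: "((\<lambda>w. exp(-(w\<^sup>2)/(2*\<tau>\<^sup>2)) * (w* sinh(b*w) - b/12* cosh(b*w))) has_integral Cr) {0..1/2}"
    unfolding Cr_def using integrable_continuous_real[OF cont3] by blast
  have h5: "((\<lambda>w. exp (-(w\<^sup>2) / (2*\<tau>\<^sup>2)) * (sinh (c*w/\<tau>\<^sup>2) * (w/\<tau>\<^sup>2)) - c/(12*\<tau>^4) * (exp (-(w\<^sup>2) / (2*\<tau>\<^sup>2)) * cosh (c*w/\<tau>\<^sup>2)))
        has_integral (Cr / \<tau>\<^sup>2)) {0..1/2}"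
  proof -
    have "((\<lambda>w. (1/\<tau>\<^sup>2) * (exp(-(w\<^sup>2)/(2*\<tau>\<^sup>2)) * (w* sinh(b*w) - b/12* cosh(b*w)))) has_integral ((1/\<tau>\<^sup>2) * Cr)) {0..1/2}"
      by (rule has_integral_mult_right[OF h4])
    moreover have "(1/\<tau>\<^sup>2) * (exp(-(w\<^sup>2)/(2*\<tau>\<^sup>2)) * (w* sinh(b*w) - b/12* cosh(b*w)))
       = exp (-(w\<^sup>2) / (2*\<tau>\<^sup>2)) * (sinh (c*w/\<tau>\<^sup>2) * (w/\<tau>\<^sup>2)) - c/(12*\<tau>^4) * (exp (-(w\<^sup>2) / (2*\<tau>\<^sup>2)) * cosh (c*w/\<tau>\<^sup>2))" for w
      unfolding b_def using tau by (simp add: field_simps eval_nat_numeral)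
    ultimately show ?thesis by simp
  qed
  have eq: "J' - c/(12*\<tau>^4) * Jf \<tau> c = Cr / \<tau>\<^sup>2" using has_integral_unique[OF h3 h5] .
  have "Cr < 0" unfolding Cr_def by (rule core[OF tau b])
  then have "exp (-(c\<^sup>2)/(24*\<tau>^4)) * (J' - c/(12*\<tau>^4) * Jf \<tau> c) < 0"
    unfolding eq using tau by (simp add: mult_pos_neg divide_neg_pos)
  then show ?thesis using dH by blast
qed

lemma Hf_decr:
  assumes tau: "\<tau> > 0" and uv: "0 \<le> u" "u < v"
  shows "Hf \<tau> v < Hf \<tau> u"
proof -
  define H' where "H' x = (SOME D. (Hf \<tau> has_real_derivative D) (at x) \<and> (x > 0 \<longrightarrow> D < 0))" for x
  have ex: "\<exists>D. (Hf \<tau> has_real_derivative D) (at x) \<and> (x > 0 \<longrightarrow> D < 0)" for x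
  proof (cases "x > 0")
    case True then show ?thesis using Hf_deriv_neg[OF tau True] by blast
  next
    case False
    have dexp: "((\<lambda>c. exp (-(c\<^sup>2)/(24*\<tau>^4))) has_real_derivative exp (-(x\<^sup>2)/(24*\<tau>^4)) * (-(2*x)/(24*\<tau>^4))) (at x)"
      using tau by (auto intro!: derivative_eq_intros simp: field_simps eval_nat_numeral)
    from DERIV_mult[OF J_deriv[OF tau] dexp] have "\<exists>D. (Hf \<tau> has_real_derivative D) (at x)"
      unfolding Hf_def[abs_def] by blast
    then show ?thesis using False by blast
  qed
  have H': "(Hf \<tau> has_real_derivative H' x) (at x) \<and> (x > 0 \<longrightarrow> H' x < 0)" for x
    unfolding H'_def using someI_ex[OF ex] .
  obtain z where z: "u < z" "z < v" "Hf \<tau> v - Hf \<tau> u = (v - u) * H' z"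
    using MVT2[OF uv(2), of "Hf \<tau>" H'] H' by blast
  have "H' z < 0" using H' z uv by auto
  then have "(v - u) * H' z < 0" using z by (simp add: mult_pos_neg)
  then show ?thesis using z by simp
qed


lemma Jf_pos: assumes tau: "\<tau> > 0" shows "Jf \<tau> c > 0"
proof -
  have "integral {0..1/2::real} (\<lambda>w. 0::real) < Jf \<tau> c"
    unfolding Jf_def using tau
    by (intro integral_less_real continuous_intros) (auto intro: mult_pos_pos)
  then show ?thesis by simp
qed

lemma Jf_abs: "Jf \<tau> \<bar>c\<bar> = Jf \<tau> c"
  unfolding Jf_def by (cases "c \<ge> 0") auto

lemma Jf_less: assumes tau: "\<tau> > 0" and c: "\<bar>c0\<bar> < c1" shows "Jf \<tau> c0 < Jf \<tau> c1"
proof -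
  have "Jf \<tau> \<bar>c0\<bar> < Jf \<tau> c1"
    unfolding Jf_def using tau
  proof (intro integral_less_real continuous_intros)
    fix w :: real assume w: "w \<in> {0<..<1/2}"
    have "cosh (\<bar>c0\<bar> * w / \<tau>\<^sup>2) < cosh (c1 * w / \<tau>\<^sup>2)"
      using w c tau by (intro cosh_real_strict_mono) (auto intro!: divide_strict_right_mono mult_strict_right_mono)
    then show "exp (-(w\<^sup>2) / (2*\<tau>\<^sup>2)) * cosh (\<bar>c0\<bar> * w / \<tau>\<^sup>2) < exp (-(w\<^sup>2) / (2*\<tau>\<^sup>2)) * cosh (c1 * w / \<tau>\<^sup>2)"
      by simp
  qed auto
  then show ?thesis by (simp add: Jf_abs)
qed

lemma ratio_bounds:
  fixes \<tau> x :: real assumes tau: "\<tau> > 0" and x: "x > 0"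
  shows "exp (- x / \<tau>\<^sup>2) < (Phi ((x+1)/\<tau>) - Phi (x/\<tau>)) / (Phi (x/\<tau>) - Phi ((x-1)/\<tau>))
       \<and> (Phi ((x+1)/\<tau>) - Phi (x/\<tau>)) / (Phi (x/\<tau>) - Phi ((x-1)/\<tau>)) < exp (- (1 - 1 / (12 * \<tau>\<^sup>2)) * x / \<tau>\<^sup>2)"
proof -
  define c1 where "c1 = x + 1/2"
  define c0 where "c0 = x - 1/2"
  define K where "K = 2 / (sqrt (2*pi) * \<tau>)"
  have K: "K > 0" unfolding K_def using tau by simp
  have N1: "Phi ((x+1)/\<tau>) - Phi (x/\<tau>) = K * exp (-(c1\<^sup>2)/(2*\<tau>\<^sup>2)) * Jf \<tau> c1"
    using Phi_J[OF tau, of c1] unfolding c1_def K_def by (simp add: add.assoc)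
  have N0: "Phi (x/\<tau>) - Phi ((x-1)/\<tau>) = K * exp (-(c0\<^sup>2)/(2*\<tau>\<^sup>2)) * Jf \<tau> c0"
    using Phi_J[OF tau, of c0] unfolding c0_def K_def by (simp add: diff_add_eq algebra_simps)
  have J0: "Jf \<tau> c0 > 0" and J1: "Jf \<tau> c1 > 0" using Jf_pos[OF tau] by auto
  have e1: "exp (-(c1\<^sup>2)/(2*\<tau>\<^sup>2)) = exp (-(c0\<^sup>2)/(2*\<tau>\<^sup>2)) * exp (- x / \<tau>\<^sup>2)"
    unfolding exp_add[symmetric] c1_def c0_def using tau by (intro arg_cong[where f=exp]) (simp add: field_simps power2_eq_square)
  have R: "(Phi ((x+1)/\<tau>) - Phi (x/\<tau>)) / (Phi (x/\<tau>) - Phi ((x-1)/\<tau>)) = exp (- x / \<tau>\<^sup>2) * (Jf \<tau> c1 / Jf \<tau> c0)"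
    unfolding N1 N0 e1 using K J0 by (simp add: field_simps)
  have abs: "\<bar>c0\<bar> < c1" unfolding c0_def c1_def using x by auto
  have low: "Jf \<tau> c1 / Jf \<tau> c0 > 1" using Jf_less[OF tau abs] J0 by simp
  have "Hf \<tau> c1 < Hf \<tau> \<bar>c0\<bar>" using Hf_decr[OF tau _ abs] by simp
  then have "Jf \<tau> c1 * exp (-(c1\<^sup>2)/(24*\<tau>^4)) < Jf \<tau> c0 * exp (-(c0\<^sup>2)/(24*\<tau>^4))"
    unfolding Hf_def Jf_abs by simp
  moreover have e2: "exp (-(c0\<^sup>2)/(24*\<tau>^4)) = exp (-(c1\<^sup>2)/(24*\<tau>^4)) * exp (x / (12*\<tau>^4))"
    unfolding exp_add[symmetric] c1_def c0_def using tau by (intro arg_cong[where f=exp]) (simp add: field_simps power2_eq_square)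
  ultimately have "Jf \<tau> c1 < Jf \<tau> c0 * exp (x / (12*\<tau>^4))" by simp
  then have up: "Jf \<tau> c1 / Jf \<tau> c0 < exp (x / (12*\<tau>^4))" using J0 by (simp add: field_simps)
  have e3: "exp (- x / \<tau>\<^sup>2) * exp (x / (12*\<tau>^4)) = exp (- (1 - 1 / (12 * \<tau>\<^sup>2)) * x / \<tau>\<^sup>2)"
    unfolding exp_add[symmetric] using tau by (intro arg_cong[where f=exp]) (simp add: field_simps eval_nat_numeral)
  show ?thesis unfolding R
  proof
    show "exp (- x / \<tau>\<^sup>2) < exp (- x / \<tau>\<^sup>2) * (Jf \<tau> c1 / Jf \<tau> c0)"
      using mult_strict_left_mono[OF low, of "exp (- x / \<tau>\<^sup>2)"] by simp
    have "exp (- x / \<tau>\<^sup>2) * (Jf \<tau> c1 / Jf \<tau> c0) < exp (- x / \<tau>\<^sup>2) * exp (x / (12*\<tau>^4))"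
      using mult_strict_left_mono[OF up, of "exp (- x / \<tau>\<^sup>2)"] by simp
    then show "exp (- x / \<tau>\<^sup>2) * (Jf \<tau> c1 / Jf \<tau> c0) < exp (- (1 - 1 / (12 * \<tau>\<^sup>2)) * x / \<tau>\<^sup>2)"
      using e3 by simp
  qed
qed


lemma small_hyper_point:
  assumes "m \<le> r + b" "r + b \<le> 1"
  shows "\<exists>k0. \<forall>x. hyper_law m r b x = (if x = k0 then 1 else 0)"
proof -
  have int01: "x = 0 \<or> x = 1" if "x \<in> \<int>" "0 \<le> x" "x \<le> 1" for x :: real
  proof -
    from that(1) obtain i where i: "x = of_int i" by (auto elim: Ints_cases)
    then have "0 \<le> i" "i \<le> 1" using that by auto
    then have "i = 0 \<or> i = 1" by auto
    then show ?thesis using i by auto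
  qed
  have cases: "(m = 0 \<and> r = 0 \<and> b = 0) \<or> (m = 0 \<and> r = 1 \<and> b = 0) \<or> (m = 0 \<and> r = 0 \<and> b = 1)
      \<or> (m = 1 \<and> r = 1 \<and> b = 0) \<or> (m = 1 \<and> r = 0 \<and> b = 1)" using assms by auto
  then show ?thesis
  proof (elim disjE conjE)
    assume "m = 0" "r = 0" "b = 0"
    then show ?thesis by (intro exI[of _ 0] allI) (auto simp: hyper_law_def)
  next
    assume "m = 0" "r = 1" "b = 0"
    then show ?thesis by (intro exI[of _ 0] allI) (auto simp: hyper_law_def)
  next
    assume "m = 0" "r = 0" "b = 1"
    then show ?thesis by (intro exI[of _ 0] allI) (auto simp: hyper_law_def)
  next
    assume "m = 1" "r = 1" "b = 0"
    then show ?thesis by (intro exI[of _ 1] allI) (auto simp: hyper_law_def dest: int01)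
  next
    assume "m = 1" "r = 0" "b = 1"
    then show ?thesis by (intro exI[of _ 0] allI) (auto simp: hyper_law_def dest: int01)
  qed
qed

lemma point_var:
  assumes "\<forall>x. P x = (if x = k0 then 1 else 0)"
  shows "law_var P = 0"
proof -
  have "law_mean P = infsum (\<lambda>x. x * P x) {k0}"
    unfolding law_mean_def by (rule infsum_cong_neutral) (use assms in auto)
  then have m: "law_mean P = k0" using assms by simp
  show ?thesis unfolding law_var_def m by (rule infsum_0) (use assms in auto)
qed


theorem lemma4p1:
  fixes P :: "real \<Rightarrow> real" and N :: enat and n \<sigma> \<tau> s :: real
  assumes law: "(N = \<infinity> \<and> (\<exists>m p. 0 \<le> p \<and> p \<le> 1 \<and> P = binom_law m p))
              \<or> (\<exists>m r b. m \<le> r + b \<and> N = enat (r + b) \<and> P = hyper_law m r b)"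
    and sym: "sym_about_mean P"
    and mean: "law_mean P = n / 2"
    and sigma_pos: "\<sigma> > 0"
    and var: "law_var P = \<sigma>\<^sup>2"
    and tau: "sigma0 N \<sigma> \<le> \<tau>" "\<tau> \<le> \<sigma>"
    and s: "s > n / 2"
  shows "exp (- (s - n / 2) / \<tau>\<^sup>2) < gg n \<tau> (s + 1) / gg n \<tau> s
       \<and> gg n \<tau> (s + 1) / gg n \<tau> s < exp (- (1 - 1 / (12 * \<tau>\<^sup>2)) * (s - n / 2) / \<tau>\<^sup>2)"
proof -
  have tpos: "\<tau> > 0"
  proof (cases N)
    case infinity
    then show ?thesis using tau sigma_pos by (simp add: sigma0_def)
  next
    case (enat k)
    then obtain m r b where mrb: "m \<le> r + b" "k = r + b" "P = hyper_law m r b" using law by auto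
    show ?thesis
    proof (cases "k \<ge> 2")
      case True
      then have "(real k - 1) / real k > 0" by simp
      then have "sigma0 N \<sigma> > 0" using enat sigma_pos by (simp add: sigma0_def)
      then show ?thesis using tau by simp
    next
      case False
      then obtain k0 where "\<forall>x. P x = (if x = k0 then 1 else 0)"
        using small_hyper_point[of m r b] mrb by auto
      then have "law_var P = 0" by (rule point_var)
      then show ?thesis using var sigma_pos by simp
    qed
  qed
  define x where "x = s - n/2"
  have x: "x > 0" using s x_def by simp
  have g1: "gg n \<tau> (s + 1) = Phi ((x+1)/\<tau>) - Phi (x/\<tau>)"
    unfolding gg_def GG_def x_def by (simp add: algebra_simps)
  have g0: "gg n \<tau> s = Phi (x/\<tau>) - Phi ((x-1)/\<tau>)"
    unfolding gg_def GG_def x_def by (simp add: algebra_simps)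
  show ?thesis unfolding g1 g0 x_def[symmetric] using ratio_bounds[OF tpos x] by simp
qed

end
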